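(* Let $\alpha\in(0,1)$, $\gamma>0$, $a>0$, $b\in\mathbb R\setminus\{0\}$, and assume $\eta=0$. Then the operator $-\mathcal A$ is not invertible; consequently $0\in\sigma(\mathcal A)$.
   Context: Let $\mu(\xi)=|\xi|^{\frac{2\alpha-1}{2}}$ and $\kappa(\alpha)=\frac{\sin(\alpha\pi)}{\pi}$. Let $H^1_L(0,1)=\{u\in H^1(0,1):u(0)=0\}$. $\mathcal H=H^1_L(0,1)\times L^2(0,1)\times H^1_0(0,1)\times L^2(0,1)\times L^2(\mathbb R)$ with inner product $\langle(u,v,y,z,\omega),(\tilde u,\tilde v,\tilde y,\tilde z,\tilde\omega)\rangle_{\mathcal H}=\int_0^1(v\bar{\tilde v}+u_x\bar{\tilde u}_x+z\bar{\tilde z}+a y_x\bar{\tilde y}_x)dx+\gamma\kappa(\alpha)\int_{\mathbb R}\omega\bar{\tilde\omega}\,d\xi$. $D(\mathcal A)$ is the set of $(u,v,y,z,\omega)\in\mathcal H$ with $u\in H^2(0,1)\cap H^1_L(0,1)$, $y\in H^2(0,1)\cap H^1_0(0,1)$, $v\in H^1_L(0,1)$, $z\in H^1_0(0,1)$, $-(\xi^2+\eta)\omega+v(1)\mu(\xi)\in L^2(\mathbb R)$, $|\xi|\omega\in L^2(\mathbb R)$, $u_x(1)+\gamma\kappa(\alpha)\int_{\mathbb R}\mu(\xi)\omega(\xi)d\xi=0$, and $\mathcal A(u,v,y,z,\omega)=(v,\,u_{xx}-bz,\,z,\,ay_{xx}+bv,\,-(\xi^2+\eta)\omega+v(1)\mu(\xi))$.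 *)

theory Defs
  imports "HOL-Analysis.Analysis"
begin

text \<open>Functions are complex valued; elements of L2 / H1 are represented by
  (pointwise) functions, H1 functions by their continuous representative on [0,1].\<close>

type_synonym cfun = "real \<Rightarrow> complex"
type_synonym state = "cfun \<times> cfun \<times> cfun \<times> cfun \<times> cfun"

definition mu :: "real \<Rightarrow> real \<Rightarrow> real" where
  "mu \<alpha> \<xi> = \<bar>\<xi>\<bar> powr ((2 * \<alpha> - 1) / 2)"

definition kappa :: "real \<Rightarrow> real" where
  "kappa \<alpha> = sin (\<alpha> * pi) / pi"

definition L2 :: "real set \<Rightarrow> cfun \<Rightarrow> bool" where
  "L2 S f \<longleftrightarrow> set_borel_measurable lborel S f \<and>
     set_integrable lborel S (\<lambda>x. (cmod (f x))\<^sup>2)"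

definition is_wderiv :: "cfun \<Rightarrow> cfun \<Rightarrow> bool" where
  "is_wderiv u g \<longleftrightarrow> L2 {0..1} g \<and>
     (\<forall>x\<in>{0..1}. u x = u 0 + set_lebesgue_integral lborel {0..x} g)"

definition H1 :: "cfun \<Rightarrow> bool" where
  "H1 u \<longleftrightarrow> (\<exists>g. is_wderiv u g)"

definition wd :: "cfun \<Rightarrow> cfun" where
  "wd u = (SOME g. is_wderiv u g)"

definition H1L :: "cfun \<Rightarrow> bool" where
  "H1L u \<longleftrightarrow> H1 u \<and> u 0 = 0"

definition H10 :: "cfun \<Rightarrow> bool" where
  "H10 u \<longleftrightarrow> H1 u \<and> u 0 = 0 \<and> u 1 = 0"

definition dx :: "cfun \<Rightarrow> cfun" where
  "dx u x = vector_derivative u (at x within {0..1})"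

definition H2 :: "cfun \<Rightarrow> bool" where
  "H2 u \<longleftrightarrow> H1 u \<and> (\<exists>g. H1 g \<and>
     (\<forall>x\<in>{0..1}. (u has_vector_derivative g x) (at x within {0..1})))"

definition dxx :: "cfun \<Rightarrow> cfun" where
  "dxx u = wd (dx u)"

definition inH :: "state \<Rightarrow> bool" where
  "inH U = (case U of (u, v, y, z, \<omega>) \<Rightarrow>
     H1L u \<and> L2 {0..1} v \<and> H10 y \<and> L2 {0..1} z \<and> L2 UNIV \<omega>)"

definition Hnormsq :: "real \<Rightarrow> real \<Rightarrow> real \<Rightarrow> state \<Rightarrow> real" where
  "Hnormsq a \<gamma> \<alpha> U = (case U of (u, v, y, z, \<omega>) \<Rightarrow>
     set_lebesgue_integral lborel {0..1}
        (\<lambda>x. (cmod (v x))\<^sup>2 + (cmod (wd u x))\<^sup>2 + (cmod (z x))\<^sup>2 + a * (cmod (wd y x))\<^sup>2)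
     + \<gamma> * kappa \<alpha> * integral\<^sup>L lborel (\<lambda>\<xi>. (cmod (\<omega> \<xi>))\<^sup>2))"

definition Hnorm :: "real \<Rightarrow> real \<Rightarrow> real \<Rightarrow> state \<Rightarrow> real" where
  "Hnorm a \<gamma> \<alpha> U = sqrt (Hnormsq a \<gamma> \<alpha> U)"

definition st_diff :: "state \<Rightarrow> state \<Rightarrow> state" where
  "st_diff U V = (case U of (u, v, y, z, \<omega>) \<Rightarrow> case V of (u', v', y', z', \<omega>') \<Rightarrow>
     (\<lambda>x. u x - u' x, \<lambda>x. v x - v' x, \<lambda>x. y x - y' x, \<lambda>x. z x - z' x, \<lambda>x. \<omega> x - \<omega>' x))"

definition st_scale :: "complex \<Rightarrow> state \<Rightarrow> state" where
  "st_scale c U = (case U of (u, v, y, z, \<omega>) \<Rightarrow>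
     (\<lambda>x. c * u x, \<lambda>x. c * v x, \<lambda>x. c * y x, \<lambda>x. c * z x, \<lambda>x. c * \<omega> x))"

text \<open>equality as elements of H (i.e. up to null sets)\<close>
definition Heq :: "real \<Rightarrow> real \<Rightarrow> real \<Rightarrow> state \<Rightarrow> state \<Rightarrow> bool" where
  "Heq a \<gamma> \<alpha> U V \<longleftrightarrow> Hnormsq a \<gamma> \<alpha> (st_diff U V) = 0"

definition domA :: "real \<Rightarrow> real \<Rightarrow> real \<Rightarrow> state \<Rightarrow> bool" where
  "domA \<gamma> \<alpha> \<eta> U = (case U of (u, v, y, z, \<omega>) \<Rightarrow>
     inH U \<and> H2 u \<and> H1L u \<and> H2 y \<and> H10 y \<and> H1L v \<and> H10 z \<and>
     L2 UNIV (\<lambda>\<xi>. - complex_of_real (\<xi>\<^sup>2 + \<eta>) * \<omega> \<xi> + v 1 * complex_of_real (mu \<alpha> \<xi>)) \<and>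
     L2 UNIV (\<lambda>\<xi>. complex_of_real \<bar>\<xi>\<bar> * \<omega> \<xi>) \<and>
     dx u 1 + complex_of_real (\<gamma> * kappa \<alpha>) *
        integral\<^sup>L lborel (\<lambda>\<xi>. complex_of_real (mu \<alpha> \<xi>) * \<omega> \<xi>) = 0)"

definition opA :: "real \<Rightarrow> real \<Rightarrow> real \<Rightarrow> real \<Rightarrow> state \<Rightarrow> state" where
  "opA a b \<alpha> \<eta> U = (case U of (u, v, y, z, \<omega>) \<Rightarrow>
     (v,
      \<lambda>x. dxx u x - complex_of_real b * z x,
      z,
      \<lambda>x. complex_of_real a * dxx y x + complex_of_real b * v x,
      \<lambda>\<xi>. - complex_of_real (\<xi>\<^sup>2 + \<eta>) * \<omega> \<xi> + v 1 * complex_of_real (mu \<alpha> \<xi>)))"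

definition invertible_op ::
  "real \<Rightarrow> real \<Rightarrow> real \<Rightarrow> (state \<Rightarrow> bool) \<Rightarrow> (state \<Rightarrow> state) \<Rightarrow> bool" where
  "invertible_op a \<gamma> \<alpha> D T \<longleftrightarrow> (\<exists>B.
     (\<forall>F. inH F \<longrightarrow> D (B F) \<and> Heq a \<gamma> \<alpha> (T (B F)) F) \<and>
     (\<forall>U. D U \<longrightarrow> Heq a \<gamma> \<alpha> (B (T U)) U) \<and>
     (\<forall>F G. inH F \<longrightarrow> inH G \<longrightarrow> Heq a \<gamma> \<alpha> F G \<longrightarrow> Heq a \<gamma> \<alpha> (B F) (B G)) \<and>
     (\<exists>C. \<forall>F. inH F \<longrightarrow> Hnorm a \<gamma> \<alpha> (B F) \<le> C * Hnorm a \<gamma> \<alpha> F))"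

definition spectrumA :: "real \<Rightarrow> real \<Rightarrow> real \<Rightarrow> real \<Rightarrow> real \<Rightarrow> complex set" where
  "spectrumA a b \<gamma> \<alpha> \<eta> = {c. \<not> invertible_op a \<gamma> \<alpha> (domA \<gamma> \<alpha> \<eta>)
       (\<lambda>U. st_diff (st_scale c U) (opA a b \<alpha> \<eta> U))}"

end

theory Submission imports Defs begin

lemma AE_reflect:
  assumes "AE x in lborel. P x" shows "AE x in lborel. P (- (x::real))"
proof -
  from assms obtain N where N: "{x\<in>space lborel. \<not> P x} \<subseteq> N" "emeasure lborel N = 0" "N \<in> sets lborel"
    by (auto elim: AE_E)
  have "AE x in lborel. x \<notin> N" using N by (intro AE_not_in) auto
  then have "AE x in lborel. (0 + (-1) * x) \<notin> N"
    by (intro AE_borel_affine) (use N in auto)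
  then show ?thesis by eventually_elim (use N in auto)
qed

lemma L2_add:
  fixes f g :: "real \<Rightarrow> complex"
  assumes "integrable lborel (\<lambda>x. (cmod (f x))\<^sup>2)" "f \<in> borel_measurable lborel"
    "integrable lborel (\<lambda>x. (cmod (g x))\<^sup>2)" "g \<in> borel_measurable lborel"
  shows "integrable lborel (\<lambda>x. (cmod (f x + g x))\<^sup>2)"
proof (rule Bochner_Integration.integrable_bound)
  show "integrable lborel (\<lambda>x. 2 * (cmod (f x))\<^sup>2 + 2 * (cmod (g x))\<^sup>2)"
    using assms by auto
  show "(\<lambda>x. (cmod (f x + g x))\<^sup>2) \<in> borel_measurable lborel" using assms by measurable
  show "AE x in lborel. norm ((cmod (f x + g x))\<^sup>2) \<le> norm (2 * (cmod (f x))\<^sup>2 + 2 * (cmod (g x))\<^sup>2)"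
  proof (intro AE_I2)
    fix x
    have t: "cmod (f x + g x) \<le> cmod (f x) + cmod (g x)" by (rule norm_triangle_ineq)
    have "(cmod (f x + g x))\<^sup>2 \<le> (cmod (f x) + cmod (g x))\<^sup>2"
      using t by (intro power_mono) auto
    also have "\<dots> \<le> 2 * (cmod (f x))\<^sup>2 + 2 * (cmod (g x))\<^sup>2"
    proof -
      have "0 \<le> (cmod (f x) - cmod (g x))\<^sup>2" by simp
      then show ?thesis by (simp add: power2_sum power2_diff)
    qed
    finally show "norm ((cmod (f x + g x))\<^sup>2) \<le> norm (2 * (cmod (f x))\<^sup>2 + 2 * (cmod (g x))\<^sup>2)"
      by simp
  qed
qed

lemma key_false:
  fixes \<omega> fs :: "real \<Rightarrow> complex" and c :: complex and m :: "real \<Rightarrow> real"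
  assumes int: "integrable lborel (\<lambda>\<xi>. (cmod (\<omega> \<xi>))\<^sup>2)"
  and ae: "AE \<xi> in lborel. complex_of_real (\<xi>\<^sup>2) * \<omega> \<xi> = c * complex_of_real (m \<xi>) + fs \<xi>"
  and msym: "\<And>\<xi>. m (-\<xi>) = m \<xi>"
  and fs: "\<And>\<xi>. 0 < \<xi> \<Longrightarrow> \<xi> \<le> 1 \<Longrightarrow> fs \<xi> = 1 \<and> fs (-\<xi>) = -1"
  shows False
proof -
  define h where "h \<xi> = (cmod (\<omega> \<xi>))\<^sup>2 + (cmod (\<omega> (-\<xi>)))\<^sup>2" for \<xi>
  have int2: "integrable lborel (\<lambda>\<xi>. (cmod (\<omega> (-\<xi>)))\<^sup>2)"
    using lborel_integrable_real_affine_iff[of "-1" "\<lambda>\<xi>. (cmod (\<omega> \<xi>))\<^sup>2" 0] int by simp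
  have inth: "integrable lborel h" unfolding h_def using int int2 by auto
  have ae2: "AE \<xi> in lborel. complex_of_real ((-\<xi>)\<^sup>2) * \<omega> (-\<xi>) = c * complex_of_real (m (-\<xi>)) + fs (-\<xi>)"
    by (rule AE_reflect[OF ae])
  have bound: "real n \<le> integral\<^sup>L lborel h" if n: "n \<ge> 1" for n :: nat
  proof -
    have "AE \<xi> in lborel. (real n)\<^sup>2 * indicator {0<..1 / real n} \<xi> \<le> h \<xi>"
      using ae ae2
    proof eventually_elim
      case (elim \<xi>)
      show ?case
      proof (cases "\<xi> \<in> {0<..1 / real n}")
        case False then show ?thesis by (simp add: h_def)
      next
        case True
        then have x0: "0 < \<xi>" and xn: "\<xi> \<le> 1 / real n" by auto
        have "1 / real n \<le> 1" using n by simp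
        then have x1: "\<xi> \<le> 1" using xn by linarith
        from elim fs[OF x0 x1] msym[of \<xi>]
        have e1: "complex_of_real (\<xi>\<^sup>2) * \<omega> \<xi> = c * complex_of_real (m \<xi>) + 1"
          and e2: "complex_of_real (\<xi>\<^sup>2) * \<omega> (-\<xi>) = c * complex_of_real (m \<xi>) - 1"
          by auto
        define p where "p = cmod (\<omega> \<xi>)"
        define q where "q = cmod (\<omega> (-\<xi>))"
        have p0: "0 \<le> p" "0 \<le> q" unfolding p_def q_def by auto
        have "2 = cmod ((c * complex_of_real (m \<xi>) + 1) - (c * complex_of_real (m \<xi>) - 1))"
          by simp
        also have "\<dots> \<le> cmod (c * complex_of_real (m \<xi>) + 1) + cmod (c * complex_of_real (m \<xi>) - 1)"
          by (rule norm_triangle_ineq4)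
        also have "\<dots> = \<xi>\<^sup>2 * p + \<xi>\<^sup>2 * q"
          unfolding e1[symmetric] e2[symmetric] p_def q_def by (simp add: norm_mult norm_power)
        finally have pq: "2 \<le> \<xi>\<^sup>2 * (p + q)" by (simp add: algebra_simps)
        have "\<xi> * real n \<le> 1" using xn n by (simp add: field_simps)
        then have "\<xi>\<^sup>2 * (real n)\<^sup>2 \<le> 1" using x0
          by (metis mult_nonneg_nonneg of_nat_0_le_iff power_le_one power_mult_distrib less_imp_le)
        then have "2 * (real n)\<^sup>2 \<le> \<xi>\<^sup>2 * (p + q) * (real n)\<^sup>2"
          using pq by (intro mult_right_mono) auto
        also have "\<dots> = (\<xi>\<^sup>2 * (real n)\<^sup>2) * (p + q)" by (simp add: algebra_simps)
        also have "\<dots> \<le> 1 * (p + q)"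
          using \<open>\<xi>\<^sup>2 * (real n)\<^sup>2 \<le> 1\<close> p0 by (intro mult_right_mono) auto
        finally have s: "2 * (real n)\<^sup>2 \<le> p + q" by simp
        have n1: "1 \<le> (real n)\<^sup>2" using n by simp
        have "(real n)\<^sup>2 \<le> (real n)\<^sup>2 * (real n)\<^sup>2"
          using mult_left_mono[OF n1, of "(real n)\<^sup>2"] by simp
        also have "\<dots> = (2 * (real n)\<^sup>2)\<^sup>2 / 4" by (simp add: power2_eq_square)
        also have "\<dots> \<le> (p + q)\<^sup>2 / 4" using s
          by (intro divide_right_mono power_mono) auto
        also have "\<dots> \<le> p\<^sup>2 + q\<^sup>2"
        proof -
          have "0 \<le> (p - q)\<^sup>2" by simp
          then have "(p + q)\<^sup>2 \<le> 4 * (p\<^sup>2 + q\<^sup>2)" using zero_le_power2[of p] zero_le_power2[of q]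
            unfolding power2_sum power2_diff by (smt (verit))
          then show ?thesis by simp
        qed
        finally show ?thesis using True by (simp add: h_def p_def q_def)
      qed
    qed
    then have "integral\<^sup>L lborel (\<lambda>\<xi>. (real n)\<^sup>2 * indicator {0<..1 / real n} \<xi>) \<le> integral\<^sup>L lborel h"
      by (intro integral_mono_AE inth) auto
    moreover have "integral\<^sup>L lborel (\<lambda>\<xi>. (real n)\<^sup>2 * indicator {0<..1 / real n} \<xi> :: real) = real n"
      using n by (simp add: power2_eq_square)
    ultimately show ?thesis by simp
  qed
  define n where "n = nat (ceiling (integral\<^sup>L lborel h)) + 1"
  have "real n \<le> integral\<^sup>L lborel h" by (rule bound) (simp add: n_def)
  moreover have "integral\<^sup>L lborel h < real n" unfolding n_def by linarith
  ultimately show False by simp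
qed

lemma sint_nonneg: assumes "\<And>x. 0 \<le> f x" shows "0 \<le> set_lebesgue_integral lborel A (f::real\<Rightarrow>real)"
  unfolding set_lebesgue_integral_def by (rule integral_nonneg_AE) (simp add: assms)

lemma T_eq: "(\<lambda>U. st_diff (st_scale 0 U) (opA a b \<alpha> \<eta> U)) = (\<lambda>U. st_scale (-1) (opA a b \<alpha> \<eta> U))"
  by (auto simp: fun_eq_iff st_diff_def st_scale_def opA_def split: prod.splits)

theorem lemma2p6:
  fixes \<alpha> \<gamma> a b \<eta> :: real
  assumes "0 < \<alpha>" "\<alpha> < 1" "\<gamma> > 0" "a > 0" "b \<noteq> 0" "\<eta> = 0"
  shows "\<not> invertible_op a \<gamma> \<alpha> (domA \<gamma> \<alpha> \<eta>) (\<lambda>U. st_scale (-1) (opA a b \<alpha> \<eta> U))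
         \<and> 0 \<in> spectrumA a b \<gamma> \<alpha> \<eta>"
proof -
  have kap: "kappa \<alpha> > 0" unfolding kappa_def using assms
    by (intro divide_pos_pos sin_gt_zero) auto
  have main: "\<not> invertible_op a \<gamma> \<alpha> (domA \<gamma> \<alpha> \<eta>) (\<lambda>U. st_scale (-1) (opA a b \<alpha> \<eta> U))"
  proof
    assume "invertible_op a \<gamma> \<alpha> (domA \<gamma> \<alpha> \<eta>) (\<lambda>U. st_scale (-1) (opA a b \<alpha> \<eta> U))"
    then obtain B where HB: "\<forall>F. inH F \<longrightarrow> domA \<gamma> \<alpha> \<eta> (B F) \<and> Heq a \<gamma> \<alpha> (st_scale (-1) (opA a b \<alpha> \<eta> (B F))) F"
      unfolding invertible_op_def by blast
    define z0 :: cfun where "z0 = (\<lambda>x. 0)"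
    define fs :: cfun where "fs \<xi> = complex_of_real (indicator {0<..1} \<xi> - indicator {-1..<0} \<xi>)" for \<xi>
    have Lz: "L2 {0..1} z0" by (simp add: L2_def z0_def set_borel_measurable_def set_integrable_def)
    have wz: "is_wderiv z0 z0" using Lz by (simp add: is_wderiv_def z0_def)
    have H1z: "H1L z0" "H10 z0" using wz by (auto simp: H1L_def H10_def H1_def z0_def)
    have fsm: "fs \<in> borel_measurable lborel" unfolding fs_def by measurable
    have fsq: "(cmod (fs x))\<^sup>2 = indicator {0<..1} x + indicator {-1..<0} x" for x
      by (auto simp: fs_def indicator_def)
    have Lf: "L2 UNIV fs"
      unfolding L2_def set_borel_measurable_def set_integrable_def fsq
      using fsm by (auto intro!: integrable_real_indicator)
    have inF: "inH (z0,z0,z0,z0,fs)" using Lz H1z Lf by (simp add: inH_def)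
    obtain u v y z \<omega> where BF: "B (z0,z0,z0,z0,fs) = (u,v,y,z,\<omega>)" by (cases "B (z0,z0,z0,z0,fs)") auto
    from HB inF have "domA \<gamma> \<alpha> \<eta> (B (z0,z0,z0,z0,fs)) \<and> Heq a \<gamma> \<alpha> (st_scale (-1) (opA a b \<alpha> \<eta> (B (z0,z0,z0,z0,fs)))) (z0,z0,z0,z0,fs)"
      by blast
    then have dom: "domA \<gamma> \<alpha> \<eta> (u,v,y,z,\<omega>)"
      and heq: "Heq a \<gamma> \<alpha> (st_scale (-1) (opA a b \<alpha> \<eta> (u,v,y,z,\<omega>))) (z0,z0,z0,z0,fs)" unfolding BF by auto
    define P where "P \<xi> = - complex_of_real (\<xi>\<^sup>2 + \<eta>) * \<omega> \<xi> + v 1 * complex_of_real (mu \<alpha> \<xi>)" for \<xi>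
    from dom have Lw: "L2 UNIV \<omega>" and LP: "L2 UNIV P" by (auto simp: domA_def inH_def P_def[abs_def])
    define D where "D \<xi> = -1 * (- complex_of_real (\<xi>\<^sup>2 + \<eta>) * \<omega> \<xi> + v 1 * complex_of_real (mu \<alpha> \<xi>)) - fs \<xi>" for \<xi>
    have "\<exists>S1. 0 \<le> S1 \<and> Hnormsq a \<gamma> \<alpha> (st_diff (st_scale (-1) (opA a b \<alpha> \<eta> (u,v,y,z,\<omega>))) (z0,z0,z0,z0,fs))
        = S1 + \<gamma> * kappa \<alpha> * integral\<^sup>L lborel (\<lambda>\<xi>. (cmod (D \<xi>))\<^sup>2)"
      apply (simp add: Hnormsq_def st_diff_def st_scale_def opA_def D_def)
      apply (rule sint_nonneg)
      using assms(4) apply simp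
      done
    then obtain S1 where S1: "0 \<le> S1" "S1 + \<gamma> * kappa \<alpha> * integral\<^sup>L lborel (\<lambda>\<xi>. (cmod (D \<xi>))\<^sup>2) = 0"
      using heq unfolding Heq_def by auto
    have I2: "0 \<le> integral\<^sup>L lborel (\<lambda>\<xi>. (cmod (D \<xi>))\<^sup>2)" by (rule integral_nonneg_AE) simp
    have "\<gamma> * kappa \<alpha> * integral\<^sup>L lborel (\<lambda>\<xi>. (cmod (D \<xi>))\<^sup>2) \<ge> 0"
      using I2 kap assms(3) by simp
    then have "\<gamma> * kappa \<alpha> * integral\<^sup>L lborel (\<lambda>\<xi>. (cmod (D \<xi>))\<^sup>2) = 0" using S1 by linarith
    then have I0: "integral\<^sup>L lborel (\<lambda>\<xi>. (cmod (D \<xi>))\<^sup>2) = 0" using kap assms(3) by simp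
    have Dsum: "D = (\<lambda>\<xi>. (- P \<xi>) + (- fs \<xi>))" by (simp add: D_def P_def fun_eq_iff)
    have intD: "integrable lborel (\<lambda>\<xi>. (cmod (D \<xi>))\<^sup>2)"
      unfolding Dsum
      using LP Lf by (intro L2_add) (auto simp: L2_def set_borel_measurable_def set_integrable_def)
    have "AE \<xi> in lborel. (cmod (D \<xi>))\<^sup>2 = 0"
      using integral_nonneg_eq_0_iff_AE[OF intD] I0 by simp
    then have ae: "AE \<xi> in lborel. complex_of_real (\<xi>\<^sup>2) * \<omega> \<xi> = v 1 * complex_of_real (mu \<alpha> \<xi>) + fs \<xi>"
    proof eventually_elim
      case (elim \<xi>)
      then have "D \<xi> = 0" by simp
      then show ?case by (simp add: D_def assms(6) algebra_simps)
    qed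
    show False
    proof (rule key_false[OF _ ae])
      show "integrable lborel (\<lambda>\<xi>. (cmod (\<omega> \<xi>))\<^sup>2)" using Lw
        by (simp add: L2_def set_integrable_def)
      show "mu \<alpha> (- \<xi>) = mu \<alpha> \<xi>" for \<xi> by (simp add: mu_def)
      show "fs \<xi> = 1 \<and> fs (- \<xi>) = - 1" if "0 < \<xi>" "\<xi> \<le> 1" for \<xi>
        using that by (simp add: fs_def indicator_def)
    qed
  qed
  then show ?thesis using T_eq[of a b \<alpha> \<eta>] unfolding spectrumA_def by simp
qed
end
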